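(* Let $\epsilon>0$ and let $G=(S,B,E)$ be a bipartite graph with weights $w:S\to\mathbb{R}_+$ and a fixed arrival order of $B$. For $y\in[0,1]^S$ let $f(y)$ be the total weight $w(M)$ of the matching $M$ produced by $\epsilon$-\textsc{Ranking} on $G$ with samples $x_j=y_j$. Let $x\in[0,1]^S$, $j^\star\in S$ and $\theta\in[0,1]$ be arbitrary, and define $x'$ by $x'_{j^\star}=\theta$ and $x'_j=x_j$ for $j\neq j^\star$. Then \[ |f(x)-f(x')|\le\left(1+\frac{2}{\epsilon}\right)w_{j^\star}. \]
   Context: Buyers $B$ arrive one at a time in the fixed order, each revealing its neighborhood $N(i)\subseteq S$. $\epsilon$-\textsc{Ranking} with samples $x\in[0,1]^S$: when buyer $i$ arrives, match $i$ to an unmatched $j\in N(i)$ maximizing $w_j(1-e^{x_j-1-\epsilon})$ (leave $i$ unmatched if none exists), with ties broken according to a fixed total order on $S$. $w(M)=\sum_{\{i,j\}\in M}w_j$ where $j\in S$. *)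

theory Defs
  imports Complex_Main
begin

definition eps_score :: "('s \<Rightarrow> real) \<Rightarrow> real \<Rightarrow> ('s \<Rightarrow> real) \<Rightarrow> 's \<Rightarrow> real" where
  "eps_score w eps x j = w j * (1 - exp (x j - 1 - eps))"

text \<open>The chosen item among candidate set C: maximal score, ties broken by the
  fixed total order on S given by an injective rank function tb (smaller rank first).\<close>
definition eps_pick :: "('s \<Rightarrow> real) \<Rightarrow> real \<Rightarrow> ('s \<Rightarrow> real) \<Rightarrow> ('s \<Rightarrow> nat) \<Rightarrow> 's set \<Rightarrow> 's" where
  "eps_pick w eps x tb C = (THE j. j \<in> C \<and> (\<forall>k\<in>C. eps_score w eps x k < eps_score w eps x j
        \<or> (eps_score w eps x k = eps_score w eps x j \<and> tb j \<le> tb k)))"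

fun eps_ranking_run :: "('b \<Rightarrow> 's set) \<Rightarrow> ('s \<Rightarrow> real) \<Rightarrow> real \<Rightarrow> ('s \<Rightarrow> nat) \<Rightarrow> ('s \<Rightarrow> real)
    \<Rightarrow> 'b list \<Rightarrow> ('b \<times> 's) set \<Rightarrow> ('b \<times> 's) set" where
  "eps_ranking_run N w eps tb x [] M = M"
| "eps_ranking_run N w eps tb x (i # bs) M =
     (let C = {j \<in> N i. j \<notin> snd ` M} in
      if C = {} then eps_ranking_run N w eps tb x bs M
      else eps_ranking_run N w eps tb x bs (insert (i, eps_pick w eps x tb C) M))"

definition eps_ranking :: "('b \<Rightarrow> 's set) \<Rightarrow> ('s \<Rightarrow> real) \<Rightarrow> real \<Rightarrow> ('s \<Rightarrow> nat) \<Rightarrow> 'b list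
    \<Rightarrow> ('s \<Rightarrow> real) \<Rightarrow> ('b \<times> 's) set" where
  "eps_ranking N w eps tb bs x = eps_ranking_run N w eps tb x bs {}"

definition match_weight :: "('s \<Rightarrow> real) \<Rightarrow> ('b \<times> 's) set \<Rightarrow> real" where
  "match_weight w M = (\<Sum>(i, j)\<in>M. w j)"

end

theory Submission
  imports Defs
begin

definition better :: "('s \<Rightarrow> real) \<Rightarrow> real \<Rightarrow> ('s \<Rightarrow> real) \<Rightarrow> ('s \<Rightarrow> nat) \<Rightarrow> 's \<Rightarrow> 's \<Rightarrow> bool" where
  "better w eps x tb j k = (eps_score w eps x k < eps_score w eps x j
        \<or> (eps_score w eps x k = eps_score w eps x j \<and> tb j \<le> tb k))"

lemma pick_unique:
  assumes "inj_on tb S" "C \<subseteq> S" "j \<in> C" "\<forall>k\<in>C. better w eps x tb j k"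
    "j' \<in> C" "\<forall>k\<in>C. better w eps x tb j' k"
  shows "j' = j"
proof -
  have b1: "better w eps x tb j j'" using assms(4,5) by blast
  have b2: "better w eps x tb j' j" using assms(3,6) by blast
  have "tb j = tb j'" using b1 b2 unfolding better_def by auto
  thus ?thesis by (rule inj_onD[OF assms(1), symmetric]) (use assms(2,3,5) in auto)
qed

lemma pick_exists:
  assumes "finite C" "C \<noteq> {}"
  shows "\<exists>j\<in>C. \<forall>k\<in>C. better w eps x tb j k"
proof -
  define m where "m = Max (eps_score w eps x ` C)"
  define C' where "C' = {k\<in>C. eps_score w eps x k = m}"
  have "m \<in> eps_score w eps x ` C" unfolding m_def using assms by simp
  hence ne: "C' \<noteq> {}" unfolding C'_def by auto
  have fin: "finite C'" unfolding C'_def using assms by simp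
  define t where "t = Min (tb ` C')"
  have "t \<in> tb ` C'" unfolding t_def using ne fin by simp
  then obtain j where j: "j \<in> C'" "tb j = t" by auto
  have "\<forall>k\<in>C. better w eps x tb j k"
  proof
    fix k assume k: "k \<in> C"
    have "eps_score w eps x k \<le> m" unfolding m_def using assms k by simp
    moreover have "eps_score w eps x j = m" "j \<in> C" using j unfolding C'_def by auto
    moreover have "eps_score w eps x k = m \<Longrightarrow> tb j \<le> tb k"
      using j fin k unfolding t_def C'_def by simp
    ultimately show "better w eps x tb j k" unfolding better_def by force
  qed
  thus ?thesis using j unfolding C'_def by auto
qed

lemma pick_eq:
  assumes "inj_on tb S" "C \<subseteq> S" "j \<in> C" "\<forall>k\<in>C. better w eps x tb j k"
  shows "eps_pick w eps x tb C = j"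
  unfolding eps_pick_def
proof (rule the_equality)
  show "j \<in> C \<and> (\<forall>k\<in>C. eps_score w eps x k < eps_score w eps x j
        \<or> (eps_score w eps x k = eps_score w eps x j \<and> tb j \<le> tb k))"
    using assms(3,4) unfolding better_def by blast
next
  fix j' assume "j' \<in> C \<and> (\<forall>k\<in>C. eps_score w eps x k < eps_score w eps x j'
        \<or> (eps_score w eps x k = eps_score w eps x j' \<and> tb j' \<le> tb k))"
  thus "j' = j" using pick_unique[OF assms(1,2,3,4)] unfolding better_def by blast
qed

lemma pick_prop:
  assumes "inj_on tb S" "C \<subseteq> S" "finite C" "C \<noteq> {}"
  shows "eps_pick w eps x tb C \<in> C \<and> (\<forall>k\<in>C. better w eps x tb (eps_pick w eps x tb C) k)"
proof -
  obtain j where "j \<in> C" "\<forall>k\<in>C. better w eps x tb j k" using pick_exists[OF assms(3,4)] by blast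
  thus ?thesis using pick_eq[OF assms(1,2)] by simp
qed

lemma mw_insert:
  assumes "finite M" "p \<notin> snd ` M"
  shows "match_weight w (insert (i, p) M) = match_weight w M + w p"
proof -
  have "(i, p) \<notin> M" using assms(2) by force
  thus ?thesis unfolding match_weight_def using assms(1) by simp
qed

definition inv :: "('s \<Rightarrow> real) \<Rightarrow> real \<Rightarrow> ('s \<Rightarrow> real) \<Rightarrow> 's set \<Rightarrow> real
   \<Rightarrow> ('b \<times> 's) set \<Rightarrow> ('b \<times> 's) set \<Rightarrow> bool" where
  "inv w eps x S s M1 M2 = ((snd ` M1 = snd ` M2 \<and> match_weight w M1 = match_weight w M2) \<or>
     (\<exists>a\<in>S. a \<notin> snd ` M1 \<and> snd ` M2 = insert a (snd ` M1)
        \<and> match_weight w M2 = match_weight w M1 + w a \<and> eps_score w eps x a \<le> s))"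

lemma run_inv:
  assumes "\<And>i. i \<in> set bs \<Longrightarrow> N i \<subseteq> S" "finite S" "inj_on tb S"
    "finite M1" "finite M2" "inv w eps x S s M1 M2"
  shows "inv w eps x S s (eps_ranking_run N w eps tb x bs M1) (eps_ranking_run N w eps tb x bs M2)"
  using assms
proof (induction bs arbitrary: M1 M2)
  case Nil
  then show ?case by simp
next
  case (Cons i bs)
  define C1 where "C1 = {j \<in> N i. j \<notin> snd ` M1}"
  define C2 where "C2 = {j \<in> N i. j \<notin> snd ` M2}"
  have NS: "N i \<subseteq> S" using Cons.prems(1) by simp
  have C1S: "C1 \<subseteq> S" "finite C1" using NS Cons.prems(2) unfolding C1_def
    by (auto intro: finite_subset)
  have C2S: "C2 \<subseteq> S" "finite C2" using NS Cons.prems(2) unfolding C2_def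
    by (auto intro: finite_subset)
  let ?p1 = "eps_pick w eps x tb C1"
  let ?p2 = "eps_pick w eps x tb C2"
  let ?R = "eps_ranking_run N w eps tb x bs"
  have r1: "eps_ranking_run N w eps tb x (i # bs) M1 =
     (if C1 = {} then ?R M1 else ?R (insert (i, ?p1) M1))" unfolding C1_def by (simp add: Let_def)
  have r2: "eps_ranking_run N w eps tb x (i # bs) M2 =
     (if C2 = {} then ?R M2 else ?R (insert (i, ?p2) M2))" unfolding C2_def by (simp add: Let_def)
  have IH: "\<And>M1 M2. finite M1 \<Longrightarrow> finite M2 \<Longrightarrow> inv w eps x S s M1 M2 \<Longrightarrow> inv w eps x S s (?R M1) (?R M2)"
    using Cons.IH Cons.prems(1-3) by simp
  have P1: "C1 \<noteq> {} \<Longrightarrow> ?p1 \<in> C1 \<and> (\<forall>k\<in>C1. better w eps x tb ?p1 k)"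
    using pick_prop[OF Cons.prems(3) C1S(1) C1S(2)] by blast
  have P2: "C2 \<noteq> {} \<Longrightarrow> ?p2 \<in> C2 \<and> (\<forall>k\<in>C2. better w eps x tb ?p2 k)"
    using pick_prop[OF Cons.prems(3) C2S(1) C2S(2)] by blast
  from Cons.prems(6) show ?case unfolding inv_def[of w eps x S s M1 M2]
  proof (elim disjE conjE bexE)
    assume U: "snd ` M1 = snd ` M2" and W: "match_weight w M1 = match_weight w M2"
    have C: "C1 = C2" unfolding C1_def C2_def using U by simp
    show ?case
    proof (cases "C1 = {}")
      case True
      then show ?thesis using r1 r2 C IH Cons.prems(4,5,6) by simp
    next
      case False
      have p: "?p1 \<notin> snd ` M1" using P1[OF False] unfolding C1_def by auto
      have "inv w eps x S s (insert (i, ?p1) M1) (insert (i, ?p2) M2)"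
        unfolding inv_def using C U W p mw_insert[OF Cons.prems(4) p] mw_insert[OF Cons.prems(5), of ?p1]
        by auto
      then show ?thesis using r1 r2 C IH Cons.prems(4,5) False by simp
    qed
  next
    fix a assume aS: "a \<in> S" and a1: "a \<notin> snd ` M1" and U: "snd ` M2 = insert a (snd ` M1)"
      and W: "match_weight w M2 = match_weight w M1 + w a" and sa: "eps_score w eps x a \<le> s"
    have C: "C2 = C1 - {a}" unfolding C1_def C2_def using U by auto
    show ?case
    proof (cases "C1 = {}")
      case True
      hence "C2 = {}" using C by simp
      then show ?thesis using r1 r2 True IH Cons.prems(4,5,6) by simp
    next
      case False
      have p: "?p1 \<notin> snd ` M1" "?p1 \<in> C1" using P1[OF False] unfolding C1_def by auto
      show ?thesis
      proof (cases "?p1 = a")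
        case False
        have c2: "?p1 \<in> C2" using C p False by simp
        hence ne: "C2 \<noteq> {}" by auto
        have bb: "\<forall>k\<in>C2. better w eps x tb ?p1 k" using P1[OF \<open>C1 \<noteq> {}\<close>] C by auto
        have eq: "?p2 = ?p1"
          using pick_eq[OF Cons.prems(3) C2S(1) c2 bb] .
        have p2: "?p1 \<notin> snd ` M2" using c2 unfolding C2_def by auto
        have "inv w eps x S s (insert (i, ?p1) M1) (insert (i, ?p2) M2)"
          unfolding inv_def eq mw_insert[OF Cons.prems(4) p(1)] mw_insert[OF Cons.prems(5) p2]
          using aS a1 U W sa False by auto
        then show ?thesis using r1 r2 ne IH Cons.prems(4,5) \<open>C1 \<noteq> {}\<close> by simp
      next
        case True
        show ?thesis
        proof (cases "C2 = {}")
          case True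
          have "inv w eps x S s (insert (i, ?p1) M1) M2"
            unfolding inv_def mw_insert[OF Cons.prems(4) p(1)]
            using U W \<open>?p1 = a\<close> by auto
          then show ?thesis using r1 r2 True IH Cons.prems(4,5) \<open>C1 \<noteq> {}\<close> by simp
        next
          case ne: False
          have q: "?p2 \<in> C2" "better w eps x tb a ?p2" using P2[OF ne] P1[OF \<open>C1 \<noteq> {}\<close>] C \<open>?p1 = a\<close>
            by auto
          have q2: "?p2 \<notin> snd ` M2" "?p2 \<noteq> a" "?p2 \<in> S" using q(1) C C2S(1) unfolding C2_def by auto
          have sq: "eps_score w eps x ?p2 \<le> s" using q(2) sa unfolding better_def by auto
          have "inv w eps x S s (insert (i, ?p1) M1) (insert (i, ?p2) M2)"
            unfolding inv_def mw_insert[OF Cons.prems(4) p(1)] mw_insert[OF Cons.prems(5) q2(1)]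
            using U W \<open>?p1 = a\<close> q2 sq by (intro disjI2 bexI[of _ ?p2]) auto
          then show ?thesis using r1 r2 ne IH Cons.prems(4,5) \<open>C1 \<noteq> {}\<close> by simp
        qed
      qed
    qed
  qed
qed

lemma pick_cong:
  assumes "\<forall>k\<in>C. x k = x' k"
  shows "eps_pick w eps x tb C = eps_pick w eps x' tb C"
proof -
  have sc: "\<And>k. k \<in> C \<Longrightarrow> eps_score w eps x k = eps_score w eps x' k"
    using assms by (simp add: eps_score_def)
  show ?thesis unfolding eps_pick_def
    by (intro arg_cong[where f=The] ext) (simp add: sc cong: conj_cong ball_cong)
qed

lemma run_del:
  assumes "js \<in> snd ` M"
  shows "eps_ranking_run N w eps tb x bs M = eps_ranking_run N w eps tb (x(js := t)) bs M"
  using assms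
proof (induction bs arbitrary: M)
  case Nil
  then show ?case by simp
next
  case (Cons i bs)
  define C where "C = {j \<in> N i. j \<notin> snd ` M}"
  have pc: "eps_pick w eps x tb C = eps_pick w eps (x(js := t)) tb C"
    using Cons.prems by (intro pick_cong) (auto simp: C_def)
  have e1: "eps_ranking_run N w eps tb x (i # bs) M =
     (if C = {} then eps_ranking_run N w eps tb x bs M
      else eps_ranking_run N w eps tb x bs (insert (i, eps_pick w eps x tb C) M))"
    unfolding C_def by (simp only: eps_ranking_run.simps Let_def)
  have e2: "eps_ranking_run N w eps tb (x(js := t)) (i # bs) M =
     (if C = {} then eps_ranking_run N w eps tb (x(js := t)) bs M
      else eps_ranking_run N w eps tb (x(js := t)) bs (insert (i, eps_pick w eps (x(js := t)) tb C) M))"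
    unfolding C_def by (simp only: eps_ranking_run.simps Let_def)
  show ?case
  proof (cases "C = {}")
    case True
    then show ?thesis unfolding e1 e2 using Cons.IH[OF Cons.prems] by (simp only: if_True simp_thms)
  next
    case False
    have jj: "js \<in> snd ` insert (i, eps_pick w eps x tb C) M" using Cons.prems by auto
    show ?thesis unfolding e1 e2 pc[symmetric] using Cons.IH[OF jj] False by (simp only: if_False simp_thms)
  qed
qed

lemma run_finite:
  "finite M \<Longrightarrow> finite (eps_ranking_run N w eps tb x bs M)"
  by (induction bs arbitrary: M) (auto simp: Let_def)

lemma weight_bound:
  assumes "eps > 0" "w a \<ge> 0" "w j \<ge> 0" "y a \<le> 1"
    "eps_score w eps y a \<le> eps_score w eps y j"
  shows "w a \<le> (1 + 2 / eps) * w j"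
proof -
  have e1: "exp eps \<ge> 1 + eps" using exp_ge_add_one_self by simp
  have "exp (y a - 1 - eps) \<le> exp (- eps)" using assms(4) by simp
  hence c: "1 - exp (-eps) \<le> 1 - exp (y a - 1 - eps)" by simp
  have sj: "eps_score w eps y j \<le> w j" unfolding eps_score_def using assms(3)
    by (simp add: mult_left_le)
  have "w a * (1 - exp (-eps)) \<le> w a * (1 - exp (y a - 1 - eps))"
    using c assms(2) by (simp add: mult_left_mono)
  also have "\<dots> \<le> w j" using assms(5) sj unfolding eps_score_def by simp
  finally have A: "w a * (1 - exp (-eps)) \<le> w j" .
  have "exp (-eps) = 1 / exp eps" by (simp add: exp_minus field_simps)
  hence "exp (-eps) \<le> 1 / (1 + eps)" using e1 assms(1)
    by (simp add: frac_le)
  hence "1 - exp (-eps) \<ge> eps / (1 + eps)" using assms(1) by (simp add: field_simps)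
  hence "w a * (eps / (1 + eps)) \<le> w j" using A assms(2)
    by (meson mult_left_mono order_trans)
  hence "w a * eps \<le> w j * (1 + eps)" using assms(1) by (simp add: field_simps)
  moreover have "w j * (1 + eps) \<le> w j * (eps + 2)" using assms(3) by (simp add: mult_left_mono)
  ultimately have "w a * eps \<le> w j * (eps + 2)" by linarith
  thus ?thesis using assms(1) by (simp add: field_simps)
qed

theorem lemma7:
  fixes S :: "'s set" and bs :: "'b list" and N :: "'b \<Rightarrow> 's set"
    and w :: "'s \<Rightarrow> real" and tb :: "'s \<Rightarrow> nat" and eps :: real
    and x :: "'s \<Rightarrow> real" and jstar :: 's and \<theta> :: real
  assumes "eps > 0"
    and "finite S"
    and "distinct bs"
    and "\<And>i. i \<in> set bs \<Longrightarrow> N i \<subseteq> S"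
    and "\<And>j. j \<in> S \<Longrightarrow> w j \<ge> 0"
    and "inj_on tb S"
    and "\<And>j. j \<in> S \<Longrightarrow> 0 \<le> x j \<and> x j \<le> 1"
    and "jstar \<in> S"
    and "0 \<le> \<theta>" and "\<theta> \<le> 1"
  shows "\<bar>match_weight w (eps_ranking N w eps tb bs x)
          - match_weight w (eps_ranking N w eps tb bs (x(jstar := \<theta>)))\<bar>
         \<le> (1 + 2 / eps) * w jstar"
proof -
  define M0 :: "('b \<times> 's) set" where "M0 = {(undefined, jstar)}"
  define D where "D = eps_ranking_run N w eps tb x bs M0"
  have js: "jstar \<in> snd ` M0" unfolding M0_def by simp
  have D': "D = eps_ranking_run N w eps tb (x(jstar := \<theta>)) bs M0"
    unfolding D_def using run_del[OF js] .
  have W0: "match_weight w M0 = w jstar" unfolding M0_def match_weight_def by simp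
  have K: "0 \<le> (1 + 2 / eps) * w jstar" using assms(1,5,8) by simp
  define Kb where "Kb = (1 + 2 / eps) * w jstar"
  have key: "match_weight w D - Kb \<le> match_weight w (eps_ranking N w eps tb bs y)
      \<and> match_weight w (eps_ranking N w eps tb bs y) \<le> match_weight w D"
    if y: "\<And>j. j \<in> S \<Longrightarrow> y j \<le> 1" and Dy: "D = eps_ranking_run N w eps tb y bs M0" for y
  proof -
    have s0: "snd ` M0 = insert jstar (snd ` {})" by (simp add: M0_def)
    have w0: "match_weight w M0 = match_weight w {} + w jstar" using W0 by (simp add: match_weight_def)
    have i0: "inv w eps y S (eps_score w eps y jstar) {} M0"
      unfolding inv_def using s0 w0 assms(8) by blast
    have fin: "finite M0" by (simp add: M0_def)
    have "inv w eps y S (eps_score w eps y jstar) (eps_ranking_run N w eps tb y bs {}) (eps_ranking_run N w eps tb y bs M0)"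
      by (rule run_inv[OF _ assms(2,6) _ fin i0]) (use assms(4) in auto)
    hence "inv w eps y S (eps_score w eps y jstar) (eps_ranking_run N w eps tb y bs {}) D"
      using Dy by simp
    hence "match_weight w (eps_ranking N w eps tb bs y) = match_weight w D \<or>
     (\<exists>a\<in>S. match_weight w D = match_weight w (eps_ranking N w eps tb bs y) + w a
        \<and> eps_score w eps y a \<le> eps_score w eps y jstar)"
      unfolding inv_def eps_ranking_def by blast
    then show ?thesis
    proof
      assume "match_weight w (eps_ranking N w eps tb bs y) = match_weight w D"
      thus ?thesis using K unfolding Kb_def by linarith
    next
      assume "\<exists>a\<in>S. match_weight w D = match_weight w (eps_ranking N w eps tb bs y) + w a
        \<and> eps_score w eps y a \<le> eps_score w eps y jstar"
      then obtain a where a: "a \<in> S" "match_weight w D = match_weight w (eps_ranking N w eps tb bs y) + w a"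
        "eps_score w eps y a \<le> eps_score w eps y jstar" by blast
      have "w a \<le> Kb" unfolding Kb_def
        using weight_bound[OF assms(1) assms(5)[OF a(1)] assms(5)[OF assms(8)] y[OF a(1)] a(3)] .
      moreover have "0 \<le> w a" using assms(5)[OF a(1)] .
      ultimately show ?thesis using a(2) by linarith
    qed
  qed
  have y1: "\<And>j. j \<in> S \<Longrightarrow> x j \<le> 1" using assms(7) by blast
  have y2: "\<And>j. j \<in> S \<Longrightarrow> (x(jstar := \<theta>)) j \<le> 1" using assms(7,10) by simp
  note k1 = key[OF y1 D_def]
  note k2 = key[OF y2 D']
  show ?thesis using k1 k2 unfolding Kb_def[symmetric] by linarith
qed

end
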